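(* Let $R$ be a discrete $\Gamma$-ring and $r\in R[2]$ a formal difference law in $R$. Then there is a unique multiplicative map (morphism of $\Gamma$-rings) $\phi:H\mathbb{Z}\to R$ with $\phi(\pm1_n)=r^n\in R[2^n]$ for all $n\ge0$; explicitly $\phi(n_1,\dots,n_k)=f(r^n)$ for any $n$ and any pointed map $f:[2^n]\to[k]$ with $f(\pm1_n)=(n_1,\dots,n_k)$.
   Context: Let $[n]=\{0,1,\dots,n\}$, pointed at $0$. A $\Gamma$-space is a functor $F$ from the finite pointed sets $[n]$ (with pointed maps) to pointed simplicial sets with $F[0]$ a point; for a pointed map $f$ we write $f$ also for $F(f)$; $\Sigma_n$ acts on $F[n]$ via permutations of $\{1,\dots,n\}$. We identify $[n]\wedge[m]$ with $[nm]$ via $i\wedge j\mapsto (j-1)n+i$. A $\Gamma$-ring is a $\Gamma$-space $R$ with unit $1\in R[1]$ (image of the unit map $\eta$) and associative unital multiplication given by natural maps $R(K)\wedge R(L)\to R(K\wedge L)$, $p\wedge q\mapsto pq$; it is discrete if all $R(K)$ are sets; $0\in R[1]$ denotes the basepoint. For $x\in R[2]$, $x^k\in R[2^k]$ is the $k$-fold product, $x^0=1$. A multiplicative map of $\Gamma$-rings is a natural transformation preserving units and products. Maps: $p^n_i:[n]\to[n-1]$, $p^n_i(j)=j$ ($j<i$), $p^n_i(i)=0$, $p^n_i(j)=j-1$ ($j>i$); for $1\le i<j\le n$ and $1\le k\le n-1$, $s^n_{i,j,k}:[n]\to[n-1]$ sends $0\mapsto0$, $i,j\mapsto k$, and the remaining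 elements order-preservingly and bijectively onto $\{1,\dots,n-1\}\setminus\{k\}$; $d^n_j:[n-1]\to[n]$ is the order-preserving injection missing $j$. $H\mathbb{Z}$ is the $\Gamma$-ring with $H\mathbb{Z}(K)$ the reduced free abelian group on $K$ (so $H\mathbb Z[k]=\mathbb Z^k$), pointed maps acting by summing coefficients along fibres, unit the inclusion of generators, multiplication $(\sum a_k k)(\sum b_l l)=\sum a_kb_l (k\wedge l)$. $\pm1_n=(1,-1)^n\in H\mathbb{Z}[2^n]$ (the $n$-th power of $(1,-1)\in H\mathbb Z[2]$). For $k\ge1$, split $\{1,\dots,2^k\}=A_+\sqcup A_-$ where $i\in A_+$ iff the binary expansion of $i-1$ has an even number of digits $1$. The special action of $\Sigma_{2^{k-1}}\times\Sigma_{2^{k-1}}$ on $F[2^k]$ is the action of the group of permutations of $\{1,\dots,2^k\}$ preserving $A_+$ and $A_-$. Let $\sigma$ be the nontrivial element of $\Sigma_2$. A formal difference law in $R$ is $r\in R[2]$ such that: (1) $p^2_2(r)=1$ and $s^2_{1,2,1}(r)=0$; (2) $p^2_1(r)\,r=r\,p^2_1(r)=\sigma(r)$ in $R[2]$; (3) for every $k\ge1$, $r^k$ is fixed under the special action; (4) for every $k\ge1$, all $1\le i<j\le 2^k$ with one of $i,j$ in $A_+$ and the other in $A_-$, and all $1\le l\le 2^k-1$: $s^{2^k}_{i,j,l}(r^k)=d^{2^k-1}_l\,p^{2^k-1}_i\,p^{2^k}_j(r^k)$. *)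

theory Defs
  imports Main
begin

section \<open>Discrete Gamma-rings, modelled on the skeleton [n] = {0,...,n}\<close>

text \<open>A discrete Gamma-ring is given by: carriers R[n] (as subsets of one type),
 basepoints, the action of pointed maps f:[n]->[m] (functions nat=>nat, only their
 values on {0..n} matter), the multiplication R[n] x R[m] -> R[nm], and the unit in R[1].\<close>

record 'a gring =
  carr :: "nat \<Rightarrow> 'a set"
  bpt  :: "nat \<Rightarrow> 'a"
  act  :: "nat \<Rightarrow> nat \<Rightarrow> (nat \<Rightarrow> nat) \<Rightarrow> 'a \<Rightarrow> 'a"
  mul  :: "nat \<Rightarrow> nat \<Rightarrow> 'a \<Rightarrow> 'a \<Rightarrow> 'a"
  one  :: "'a"

definition pmap :: "nat \<Rightarrow> nat \<Rightarrow> (nat \<Rightarrow> nat) \<Rightarrow> bool" where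
  "pmap n m f \<longleftrightarrow> f 0 = 0 \<and> (\<forall>i\<le>n. f i \<le> m)"

text \<open>Smash product of pointed maps, using [n]^[m] = [nm], i^j |-> (j-1)n+i.\<close>
definition smash_map :: "nat \<Rightarrow> nat \<Rightarrow> (nat \<Rightarrow> nat) \<Rightarrow> (nat \<Rightarrow> nat) \<Rightarrow> nat \<Rightarrow> nat" where
  "smash_map n m f g x =
     (if x = 0 then 0 else
      (let i = (x - 1) mod n + 1; j = (x - 1) div n + 1 in
       if f i = 0 \<or> g j = 0 then 0 else (g j - 1) * m + f i))"

definition discrete_gamma_ring :: "'a gring \<Rightarrow> bool" where
  "discrete_gamma_ring R \<longleftrightarrow>
     carr R 0 = {bpt R 0} \<and>
     (\<forall>n. bpt R n \<in> carr R n) \<and>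
     (\<forall>n m f x. pmap n m f \<longrightarrow> x \<in> carr R n \<longrightarrow> act R n m f x \<in> carr R m) \<and>
     (\<forall>n m f. pmap n m f \<longrightarrow> act R n m f (bpt R n) = bpt R m) \<and>
     (\<forall>n m f g x. (\<forall>i\<le>n. f i = g i) \<longrightarrow> x \<in> carr R n \<longrightarrow> act R n m f x = act R n m g x) \<and>
     (\<forall>n x. x \<in> carr R n \<longrightarrow> act R n n id x = x) \<and>
     (\<forall>n m l f g x. pmap n m f \<longrightarrow> pmap m l g \<longrightarrow> x \<in> carr R n \<longrightarrow>
        act R m l g (act R n m f x) = act R n l (g \<circ> f) x) \<and>
     one R \<in> carr R 1 \<and>
     (\<forall>n m x y. x \<in> carr R n \<longrightarrow> y \<in> carr R m \<longrightarrow> mul R n m x y \<in> carr R (n * m)) \<and>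
     (\<forall>n m y. y \<in> carr R m \<longrightarrow> mul R n m (bpt R n) y = bpt R (n * m)) \<and>
     (\<forall>n m x. x \<in> carr R n \<longrightarrow> mul R n m x (bpt R m) = bpt R (n * m)) \<and>
     (\<forall>n n' m m' f g x y. pmap n m f \<longrightarrow> pmap n' m' g \<longrightarrow> x \<in> carr R n \<longrightarrow> y \<in> carr R n' \<longrightarrow>
        mul R m m' (act R n m f x) (act R n' m' g y) =
        act R (n * n') (m * m') (smash_map n m f g) (mul R n n' x y)) \<and>
     (\<forall>n m l x y z. x \<in> carr R n \<longrightarrow> y \<in> carr R m \<longrightarrow> z \<in> carr R l \<longrightarrow>
        mul R (n * m) l (mul R n m x y) z = mul R n (m * l) x (mul R m l y z)) \<and>
     (\<forall>n x. x \<in> carr R n \<longrightarrow> mul R 1 n (one R) x = x \<and> mul R n 1 x (one R) = x)"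

primrec gpow :: "'a gring \<Rightarrow> 'a \<Rightarrow> nat \<Rightarrow> 'a" where
  "gpow R x 0 = one R"
| "gpow R x (Suc k) = mul R (2 ^ k) 2 (gpow R x k) x"

definition multiplicative_map :: "'a gring \<Rightarrow> 'b gring \<Rightarrow> (nat \<Rightarrow> 'a \<Rightarrow> 'b) \<Rightarrow> bool" where
  "multiplicative_map R S phi \<longleftrightarrow>
     (\<forall>n x. x \<in> carr R n \<longrightarrow> phi n x \<in> carr S n) \<and>
     (\<forall>n. phi n (bpt R n) = bpt S n) \<and>
     (\<forall>n m f x. pmap n m f \<longrightarrow> x \<in> carr R n \<longrightarrow> phi m (act R n m f x) = act S n m f (phi n x)) \<and>
     phi 1 (one R) = one S \<and>
     (\<forall>n m x y. x \<in> carr R n \<longrightarrow> y \<in> carr R m \<longrightarrow>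
        phi (n * m) (mul R n m x y) = mul S n m (phi n x) (phi m y))"

text \<open>HZ[n] = Z^n, as integer functions supported on {1..n}.\<close>
definition HZ :: "(nat \<Rightarrow> int) gring" where
  "HZ = \<lparr> carr = (\<lambda>n. {v. \<forall>i. (i = 0 \<or> n < i) \<longrightarrow> v i = 0}),
          bpt = (\<lambda>n i. 0),
          act = (\<lambda>n m f v j. if 1 \<le> j \<and> j \<le> m then (\<Sum>i\<in>{i. 1 \<le> i \<and> i \<le> n \<and> f i = j}. v i) else 0),
          mul = (\<lambda>n m v w k. if 1 \<le> k \<and> k \<le> n * m
                    then v ((k - 1) mod n + 1) * w ((k - 1) div n + 1) else 0),
          one = (\<lambda>i. if i = 1 then 1 else 0) \<rparr>"

definition one_minus_one :: "nat \<Rightarrow> int" where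
  "one_minus_one = (\<lambda>i. if i = 1 then 1 else if i = 2 then -1 else 0)"

definition pm1 :: "nat \<Rightarrow> nat \<Rightarrow> int" where
  "pm1 n = gpow HZ one_minus_one n"

definition pmap_p :: "nat \<Rightarrow> nat \<Rightarrow> nat \<Rightarrow> nat" where
  "pmap_p n i j = (if j < i then j else if j = i then 0 else j - 1)"

definition pmap_s :: "nat \<Rightarrow> nat \<Rightarrow> nat \<Rightarrow> nat \<Rightarrow> nat \<Rightarrow> nat" where
  "pmap_s n i j k m =
     (if m = 0 then 0 else if m = i \<or> m = j then k else
      (let t = m - ((if i < m then 1 else 0) + (if j < m then 1 else 0)) in
       if t < k then t else t + 1))"

definition pmap_d :: "nat \<Rightarrow> nat \<Rightarrow> nat \<Rightarrow> nat" where
  "pmap_d n j m = (if m < j then m else m + 1)"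

definition swap12 :: "nat \<Rightarrow> nat" where
  "swap12 m = (if m = 1 then 2 else if m = 2 then 1 else m)"

fun popcount :: "nat \<Rightarrow> nat" where
  "popcount n = (if n = 0 then 0 else n mod 2 + popcount (n div 2))"

definition Aplus :: "nat \<Rightarrow> nat set" where
  "Aplus k = {i. 1 \<le> i \<and> i \<le> 2 ^ k \<and> even (popcount (i - 1))}"

definition Aminus :: "nat \<Rightarrow> nat set" where
  "Aminus k = {i. 1 \<le> i \<and> i \<le> 2 ^ k \<and> odd (popcount (i - 1))}"

definition special_perm :: "nat \<Rightarrow> (nat \<Rightarrow> nat) \<Rightarrow> bool" where
  "special_perm k \<pi> \<longleftrightarrow> \<pi> 0 = 0 \<and> bij_betw \<pi> {1..2 ^ k} {1..2 ^ k} \<and>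
     \<pi> ` Aplus k = Aplus k \<and> \<pi> ` Aminus k = Aminus k"

definition formal_difference_law :: "'a gring \<Rightarrow> 'a \<Rightarrow> bool" where
  "formal_difference_law R r \<longleftrightarrow>
     r \<in> carr R 2 \<and>
     act R 2 1 (pmap_p 2 2) r = one R \<and>
     act R 2 1 (pmap_s 2 1 2 1) r = bpt R 1 \<and>
     mul R 1 2 (act R 2 1 (pmap_p 2 1) r) r = act R 2 2 swap12 r \<and>
     mul R 2 1 r (act R 2 1 (pmap_p 2 1) r) = act R 2 2 swap12 r \<and>
     (\<forall>k \<pi>. 1 \<le> k \<longrightarrow> special_perm k \<pi> \<longrightarrow>
        act R (2 ^ k) (2 ^ k) \<pi> (gpow R r k) = gpow R r k) \<and>
     (\<forall>k i j l. 1 \<le> k \<longrightarrow> 1 \<le> i \<longrightarrow> i < j \<longrightarrow> j \<le> 2 ^ k \<longrightarrow>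
        ((i \<in> Aplus k \<and> j \<in> Aminus k) \<or> (i \<in> Aminus k \<and> j \<in> Aplus k)) \<longrightarrow>
        1 \<le> l \<longrightarrow> l \<le> 2 ^ k - 1 \<longrightarrow>
        act R (2 ^ k) (2 ^ k - 1) (pmap_s (2 ^ k) i j l) (gpow R r k) =
        act R (2 ^ k - 2) (2 ^ k - 1) (pmap_d (2 ^ k - 1) l)
          (act R (2 ^ k - 1) (2 ^ k - 2) (pmap_p (2 ^ k - 1) i)
            (act R (2 ^ k) (2 ^ k - 1) (pmap_p (2 ^ k) j) (gpow R r k))))"

end

theory Submission
  imports Defs
begin


declare popcount.simps[simp del]

lemma pc0[simp]: "popcount 0 = 0" by (subst popcount.simps) simp
lemma pc_rec: "popcount x = x mod 2 + popcount (x div 2)"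
  by (cases "x = 0") (simp, subst popcount.simps, simp)

lemma pc_add: "a < 2^n \<Longrightarrow> popcount (a + 2^n * b) = popcount a + popcount b"
proof (induction n arbitrary: a)
  case 0 then show ?case by simp
next
  case (Suc n)
  have m: "(a + 2^Suc n * b) mod 2 = a mod 2" by (simp add: mult.assoc)
  have d: "(a + 2^Suc n * b) div 2 = a div 2 + 2^n * b" by (simp add: mult.assoc)
  have "a div 2 < 2^n" using Suc.prems by simp
  then have "popcount (a div 2 + 2^n * b) = popcount (a div 2) + popcount b" by (rule Suc.IH)
  then show ?case using m d pc_rec[of "a + 2^Suc n * b"] pc_rec[of a] by simp
qed

lemma HZ_simps:
  "carr HZ n = {v. \<forall>i. (i = 0 \<or> n < i) \<longrightarrow> v i = 0}"
  "bpt HZ n = (\<lambda>i. 0)"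
  "act HZ n m f v = (\<lambda>j. if 1 \<le> j \<and> j \<le> m then (\<Sum>i\<in>{i. 1 \<le> i \<and> i \<le> n \<and> f i = j}. v i) else 0)"
  "mul HZ n m v w = (\<lambda>k. if 1 \<le> k \<and> k \<le> n * m
                    then v ((k - 1) mod n + 1) * w ((k - 1) div n + 1) else 0)"
  "one HZ = (\<lambda>i. if i = 1 then 1 else 0)"
  by (simp_all add: HZ_def)

definition sg :: "nat \<Rightarrow> bool" where "sg x = even (popcount (x - 1))"

lemma pm1_val: "pm1 n x = (if 1 \<le> x \<and> x \<le> 2^n then (if sg x then 1 else -1) else 0)"
proof (induction n arbitrary: x)
  case 0 then show ?case by (simp add: pm1_def HZ_simps sg_def)
next
  case (Suc n)
  have e: "pm1 (Suc n) x = (if 1 \<le> x \<and> x \<le> 2^n * 2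
      then pm1 n ((x - 1) mod 2^n + 1) * one_minus_one ((x - 1) div 2^n + 1) else 0)"
    by (simp add: pm1_def HZ_simps)
  show ?case
  proof (cases "1 \<le> x \<and> x \<le> 2^Suc n")
    case True
    define a where "a = (x - 1) mod 2^n"
    define b where "b = (x - 1) div 2^n"
    have xa: "x - 1 = a + 2^n * b" unfolding a_def b_def by simp
    have a_lt: "a < 2^n" unfolding a_def by simp
    have "x - 1 < 2 * 2^n" using True by (cases x) auto
    then have b_lt: "b < 2" unfolding b_def
      by (intro less_mult_imp_div_less) simp
    have "b = 0 \<or> b = 1" using b_lt by auto
    then have pcb: "popcount b = b" using pc_rec[of 1] by auto
    have "pm1 n (a + 1) = (if sg (a+1) then 1 else -1)" using Suc.IH[of "a+1"] a_lt by simp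
    moreover have "sg x = (even (popcount a) = (b = 0))"
      unfolding sg_def using xa pc_add[OF a_lt, of b] pcb b_lt by (cases "b = 0") auto
    moreover have "one_minus_one (b + 1) = (if b = 0 then 1 else -1)"
      using b_lt by (cases "b = 0") (auto simp: one_minus_one_def)
    ultimately show ?thesis using e True unfolding a_def[symmetric] b_def[symmetric]
      by (auto simp: sg_def)
  next
    case False then show ?thesis using e by auto
  qed
qed




lemma pm1_carr: "pm1 n \<in> carr HZ (2^n)"
  by (simp add: HZ_simps pm1_val)

lemma HZ_act_id: "v \<in> carr HZ N \<Longrightarrow> act HZ N N id v = v"
proof
  fix j assume v: "v \<in> carr HZ N"
  show "act HZ N N id v j = v j"
  proof (cases "1 \<le> j \<and> j \<le> N")
    case True
    then have "{i. 1 \<le> i \<and> i \<le> N \<and> id i = j} = {j}" by auto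
    then show ?thesis using True by (simp add: HZ_simps)
  next
    case False then show ?thesis using v by (cases "j = 0") (auto simp: HZ_simps)
  qed
qed

lemma HZ_act_carr: "act HZ n m f v \<in> carr HZ m"
  by (simp add: HZ_simps)

lemma HZ_act_comp:
  assumes f: "pmap n m f" and g: "pmap m l g"
  shows "act HZ m l g (act HZ n m f v) = act HZ n l (g \<circ> f) v"
proof
  fix j
  show "act HZ m l g (act HZ n m f v) j = act HZ n l (g \<circ> f) v j"
  proof (cases "1 \<le> j \<and> j \<le> l")
    case True
    let ?S = "{x. 1 \<le> x \<and> x \<le> n \<and> g (f x) = j}"
    let ?T = "{y. 1 \<le> y \<and> y \<le> m \<and> g y = j}"
    have sub: "f ` ?S \<subseteq> ?T"
    proof
      fix y assume "y \<in> f ` ?S"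
      then obtain x where x: "x \<in> ?S" "y = f x" by auto
      have "f x \<noteq> 0"
      proof
        assume "f x = 0"
        then have "g (f x) = 0" using g by (simp add: pmap_def)
        then show False using x True by simp
      qed
      moreover have "f x \<le> m" using x f by (auto simp: pmap_def)
      ultimately show "y \<in> ?T" using x by auto
    qed
    have "(\<Sum>y\<in>?T. \<Sum>x\<in>{x. x \<in> ?S \<and> f x = y}. v x) = (\<Sum>x\<in>?S. v x)"
      by (rule sum.group[OF _ _ sub]) auto
    moreover have "\<And>y. y \<in> ?T \<Longrightarrow> {x. x \<in> ?S \<and> f x = y} = {x. 1 \<le> x \<and> x \<le> n \<and> f x = y}"
      by auto
    ultimately show ?thesis using True by (simp add: HZ_simps)
  next
    case False
    have "\<And>w n' h. act HZ n' l h w j = 0" using False by (auto simp: HZ_simps)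
    then show ?thesis by metis
  qed
qed

lemma sum_pm1:
  assumes "F \<subseteq> {1..2^n}"
  shows "(\<Sum>x\<in>F. pm1 n x) = int (card {x\<in>F. sg x}) - int (card {x\<in>F. \<not> sg x})"
proof -
  have fin: "finite F" using assms finite_subset by blast
  have "(\<Sum>x\<in>F. pm1 n x) = (\<Sum>x\<in>F. if sg x then 1 else -1)"
    using assms by (intro sum.cong) (auto simp: pm1_val)
  also have "\<dots> = (\<Sum>x\<in>F \<inter> {x. sg x}. 1) + (\<Sum>x\<in>F \<inter> - {x. sg x}. -1)"
    by (rule sum.If_cases[OF fin])
  also have "\<dots> = int (card {x\<in>F. sg x}) - int (card {x\<in>F. \<not> sg x})"
    by (simp add: Int_def Compl_eq set_diff_eq)
  finally show ?thesis .
qed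

lemma mul_pm1: "mul HZ (2^p) (2^q) (pm1 p) (pm1 q) = pm1 (p + q)"
proof
  fix k
  show "mul HZ (2^p) (2^q) (pm1 p) (pm1 q) k = pm1 (p + q) k"
  proof (cases "1 \<le> k \<and> k \<le> 2^p * 2^q")
    case True
    define a where "a = (k - 1) mod 2^p"
    define b where "b = (k - 1) div 2^p"
    have ka: "k - 1 = a + 2^p * b" unfolding a_def b_def by simp
    have a_lt: "a < 2^p" unfolding a_def by simp
    have "k - 1 < 2^q * 2^p" using True by (cases k) (auto simp: mult.commute)
    then have b_lt: "b < 2^q" unfolding b_def by (intro less_mult_imp_div_less) simp
    have "sg k = (even (popcount a) = even (popcount b))"
      unfolding sg_def using ka pc_add[OF a_lt, of b] by simp
    moreover have "sg (a+1) = even (popcount a)" "sg (b+1) = even (popcount b)"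
      by (simp_all add: sg_def)
    ultimately show ?thesis using True a_lt b_lt
      unfolding HZ_simps a_def[symmetric] b_def[symmetric] pm1_val[of p] pm1_val[of q] pm1_val[of "p+q"]
      by (auto simp: power_add)
  next
    case False then show ?thesis by (simp add: HZ_simps pm1_val power_add)
  qed
qed




lemma divmod_uniq:
  fixes a :: nat
  assumes "x1 < a" "x2 < a" "y1 * a + x1 = y2 * a + x2"
  shows "x1 = x2 \<and> y1 = y2"
proof -
  have m1: "(y1 * a + x1) mod a = x1" and m2: "(y2 * a + x2) mod a = x2" using assms(1,2) by auto
  have d1: "(y1 * a + x1) div a = y1" and d2: "(y2 * a + x2) div a = y2" using assms(1,2) by auto
  have "x1 = x2" using m1 m2 unfolding assms(3) by simp
  moreover have "y1 = y2" using d1 d2 unfolding assms(3) by simp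
  ultimately show ?thesis by simp
qed

lemma HZ_smash:
  assumes N: "1 \<le> N" and M: "1 \<le> M" and f: "pmap N a f" and g: "pmap M b g"
  shows "mul HZ a b (act HZ N a f v) (act HZ M b g w)
       = act HZ (N * M) (a * b) (smash_map N a f g) (mul HZ N M v w)"
proof
  fix z
  show "mul HZ a b (act HZ N a f v) (act HZ M b g w) z
       = act HZ (N * M) (a * b) (smash_map N a f g) (mul HZ N M v w) z"
  proof (cases "1 \<le> z \<and> z \<le> a * b")
    case True
    then have a0: "0 < a" by (cases a) auto
    define i where "i = (z - 1) mod a + 1"
    define j where "j = (z - 1) div a + 1"
    have zij: "z - 1 = (j - 1) * a + (i - 1)" unfolding i_def j_def by simp
    have i1: "1 \<le> i" "i \<le> a" unfolding i_def using a0 by (auto simp: Suc_leI)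
    have "z - 1 < b * a" using True by (cases z) (auto simp: mult.commute)
    then have j1: "1 \<le> j" "j \<le> b" unfolding j_def by (auto intro!: Suc_leI less_mult_imp_div_less)
    let ?F = "{x. 1 \<le> x \<and> x \<le> N \<and> f x = i}"
    let ?G = "{y. 1 \<le> y \<and> y \<le> M \<and> g y = j}"
    let ?T = "{t. 1 \<le> t \<and> t \<le> N * M \<and> smash_map N a f g t = z}"
    define h where "h = (\<lambda>(x::nat, y::nat). (y - 1) * N + x)"
    have hmod: "\<And>x y. 1 \<le> x \<Longrightarrow> x \<le> N \<Longrightarrow> (h (x,y) - 1) mod N + 1 = x"
    proof -
      fix x y :: nat assume "1 \<le> x" "x \<le> N"
      then obtain x' where x': "x = Suc x'" "x' < N" by (cases x) auto
      then have "h (x,y) - 1 = x' + (y - 1) * N" unfolding h_def by simp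
      then show "(h (x,y) - 1) mod N + 1 = x" using x' by simp
    qed
    have hdiv: "\<And>x y. 1 \<le> x \<Longrightarrow> x \<le> N \<Longrightarrow> 1 \<le> y \<Longrightarrow> (h (x,y) - 1) div N + 1 = y"
    proof -
      fix x y :: nat assume "1 \<le> x" "x \<le> N" "1 \<le> y"
      then obtain x' where x': "x = Suc x'" "x' < N" by (cases x) auto
      then have "h (x,y) - 1 = x' + (y - 1) * N" unfolding h_def by simp
      then show "(h (x,y) - 1) div N + 1 = y" using x' \<open>1 \<le> y\<close> by simp
    qed
    have bij: "bij_betw h (?F \<times> ?G) ?T"
    proof (rule bij_betw_imageI)
      show "inj_on h (?F \<times> ?G)"
      proof (rule inj_onI)
        fix p q assume p: "p \<in> ?F \<times> ?G" and q: "q \<in> ?F \<times> ?G" and e: "h p = h q"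
        obtain x y where pxy: "p = (x,y)" by (cases p)
        obtain x' y' where qxy: "q = (x',y')" by (cases q)
        have "x = x'" using hmod[of x y] hmod[of x' y'] e p q pxy qxy by auto
        moreover have "y = y'" using hdiv[of x y] hdiv[of x' y'] e p q pxy qxy by auto
        ultimately show "p = q" using pxy qxy by simp
      qed
    next
      show "h ` (?F \<times> ?G) = ?T"
      proof
        show "h ` (?F \<times> ?G) \<subseteq> ?T"
        proof
          fix t assume "t \<in> h ` (?F \<times> ?G)"
          then obtain x y where xy: "x \<in> ?F" "y \<in> ?G" "t = h (x,y)" by auto
          have t1: "1 \<le> t" using xy unfolding h_def by auto
          have "(y - 1) * N + x \<le> (M - 1) * N + N" using xy by (intro add_mono mult_right_mono) auto
          also have "\<dots> = M * N" using M by (cases M) auto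
          finally have t2: "t \<le> N * M" using xy unfolding h_def by (simp add: mult.commute)
          have "smash_map N a f g t = (if f x = 0 \<or> g y = 0 then 0 else (g y - 1) * a + f x)"
            unfolding smash_map_def Let_def using t1 hmod[of x y] hdiv[of x y] xy by auto
          also have "\<dots> = z" using xy i1 j1 zij True by auto
          finally show "t \<in> ?T" using t1 t2 by simp
        qed
      next
        show "?T \<subseteq> h ` (?F \<times> ?G)"
        proof
          fix t assume t: "t \<in> ?T"
          define x where "x = (t - 1) mod N + 1"
          define y where "y = (t - 1) div N + 1"
          have x1: "1 \<le> x" "x \<le> N" unfolding x_def using N by (auto simp: Suc_leI)
          have "t - 1 < M * N" using t by (cases t) (auto simp: mult.commute)
          then have y1: "1 \<le> y" "y \<le> M" unfolding y_def by (auto intro!: Suc_leI less_mult_imp_div_less)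
          have ht: "h (x,y) = t" unfolding h_def x_def y_def using t
            by (cases t) (auto simp: mult.commute)
          have sm: "smash_map N a f g t = (if f x = 0 \<or> g y = 0 then 0 else (g y - 1) * a + f x)"
            unfolding smash_map_def Let_def x_def y_def using t by auto
          then have nz: "f x \<noteq> 0" "g y \<noteq> 0" using t True by (auto split: if_splits)
          then have "(g y - 1) * a + (f x - 1) = (j - 1) * a + (i - 1)"
            using sm t zij True by auto
          moreover have "f x - 1 < a" using f x1 nz unfolding pmap_def by auto
          moreover have "i - 1 < a" using i1 by auto
          ultimately have "f x - 1 = i - 1 \<and> g y - 1 = j - 1" by (intro divmod_uniq)
          then have "f x = i" "g y = j" using nz i1 j1 by auto
          then show "t \<in> h ` (?F \<times> ?G)" using ht x1 y1 by force
        qed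
      qed
    qed
    have finF: "finite ?F" "finite ?G" by auto
    have "mul HZ a b (act HZ N a f v) (act HZ M b g w) z = (\<Sum>x\<in>?F. v x) * (\<Sum>y\<in>?G. w y)"
      using True i1 j1 unfolding HZ_simps i_def j_def by simp
    also have "\<dots> = (\<Sum>p\<in>?F \<times> ?G. v (fst p) * w (snd p))"
      by (simp add: sum_product sum.cartesian_product split_beta)
    also have "\<dots> = (\<Sum>p\<in>?F \<times> ?G. mul HZ N M v w (h p))"
    proof (rule sum.cong)
      fix p assume p: "p \<in> ?F \<times> ?G"
      obtain x y where pxy: "p = (x,y)" by (cases p)
      have "1 \<le> h p" using p pxy unfolding h_def by auto
      moreover have "h p \<le> N * M"
      proof -
        have "(y - 1) * N + x \<le> (M - 1) * N + N" using p pxy by (intro add_mono mult_right_mono) auto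
        also have "\<dots> = M * N" using M by (cases M) auto
        finally show ?thesis using pxy unfolding h_def by (simp add: mult.commute)
      qed
      ultimately show "v (fst p) * w (snd p) = mul HZ N M v w (h p)"
        using hmod[of x y] hdiv[of x y] p pxy by (simp add: HZ_simps)
    qed simp
    also have "\<dots> = (\<Sum>t\<in>?T. mul HZ N M v w t)"
      by (rule sum.reindex_bij_betw[OF bij])
    also have "\<dots> = act HZ (N * M) (a * b) (smash_map N a f g) (mul HZ N M v w) z"
      using True by (simp add: HZ_simps)
    finally show ?thesis .
  next
    case False
    have "\<And>u n' m' k. act HZ n' (a*b) k u z = 0" using False by (auto simp: HZ_simps)
    moreover have "\<And>u u'. mul HZ a b u u' z = 0" using False by (auto simp: HZ_simps)
    ultimately show ?thesis by metis
  qed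
qed




definition qn :: "nat \<Rightarrow> nat \<Rightarrow> nat" where "qn n x = (if x \<le> 2^n then x else 0)"

lemma pm1_Suc_low: "x \<le> 2^n \<Longrightarrow> pm1 (Suc n) x = pm1 n x"
  by (simp add: pm1_val)

lemma pmap_lift: "pmap (2^n) k f \<Longrightarrow> pmap (2^Suc n) k (f \<circ> qn n)"
  by (auto simp: pmap_def qn_def)

lemma HZ_lift:
  assumes f: "pmap (2^n) k f"
  shows "act HZ (2^Suc n) k (f \<circ> qn n) (pm1 (Suc n)) = act HZ (2^n) k f (pm1 n)"
proof
  fix j
  show "act HZ (2^Suc n) k (f \<circ> qn n) (pm1 (Suc n)) j = act HZ (2^n) k f (pm1 n) j"
  proof (cases "1 \<le> j \<and> j \<le> k")
    case True
    have e: "{x. 1 \<le> x \<and> x \<le> 2^Suc n \<and> (f \<circ> qn n) x = j} = {x. 1 \<le> x \<and> x \<le> 2^n \<and> f x = j}"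
      using True f by (auto simp: qn_def pmap_def)
    have "(\<Sum>x\<in>{x. 1 \<le> x \<and> x \<le> 2^n \<and> f x = j}. pm1 (Suc n) x) = (\<Sum>x\<in>{x. 1 \<le> x \<and> x \<le> 2^n \<and> f x = j}. pm1 n x)"
      by (rule sum.cong) (auto simp: pm1_Suc_low)
    then show ?thesis using True unfolding HZ_simps e by simp
  next
    case False
    have "\<And>u n' h. act HZ n' k h u j = 0" using False by (auto simp: HZ_simps)
    then show ?thesis by metis
  qed
qed

definition ext_map :: "nat \<Rightarrow> (nat \<Rightarrow> nat) \<Rightarrow> nat \<Rightarrow> nat \<Rightarrow> nat \<Rightarrow> nat" where
  "ext_map n f c j x = (if x \<le> 2^n then f x else if x = 2^n + c then j else 0)"

lemma pmap_ext: "pmap (2^n) k f \<Longrightarrow> j \<le> k \<Longrightarrow> pmap (2^Suc n) k (ext_map n f c j)"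
  by (auto simp: pmap_def ext_map_def)

lemma HZ_ext:
  assumes f: "pmap (2^n) k f" and c: "1 \<le> c" "c \<le> 2^n" and j: "1 \<le> j" "j \<le> k"
  shows "act HZ (2^Suc n) k (ext_map n f c j) (pm1 (Suc n))
       = (act HZ (2^n) k f (pm1 n))(j := act HZ (2^n) k f (pm1 n) j + pm1 (Suc n) (2^n + c))"
proof
  fix i
  show "act HZ (2^Suc n) k (ext_map n f c j) (pm1 (Suc n)) i
       = ((act HZ (2^n) k f (pm1 n))(j := act HZ (2^n) k f (pm1 n) j + pm1 (Suc n) (2^n + c))) i"
  proof (cases "1 \<le> i \<and> i \<le> k")
    case True
    let ?A = "{x. 1 \<le> x \<and> x \<le> 2^n \<and> f x = i}"
    have e: "{x. 1 \<le> x \<and> x \<le> 2^Suc n \<and> ext_map n f c j x = i} = ?A \<union> (if i = j then {2^n + c} else {})"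
      using True f c by (auto simp: ext_map_def pmap_def)
    have s: "(\<Sum>x\<in>?A. pm1 (Suc n) x) = (\<Sum>x\<in>?A. pm1 n x)"
      by (rule sum.cong) (auto simp: pm1_Suc_low)
    have fin: "finite ?A" by auto
    have nA: "2^n + c \<notin> ?A" using c by auto
    show ?thesis
    proof (cases "i = j")
      case True2: True
      have "(\<Sum>x\<in>?A \<union> {2^n + c}. pm1 (Suc n) x) = (\<Sum>x\<in>?A. pm1 (Suc n) x) + pm1 (Suc n) (2^n + c)"
        using fin nA by simp
      then show ?thesis using True True2 e s unfolding HZ_simps by simp
    next
      case False2: False
      then show ?thesis using True e s unfolding HZ_simps by simp
    qed
  next
    case False
    have "\<And>u n' h. act HZ n' k h u i = 0" using False by (auto simp: HZ_simps)
    then show ?thesis using False j by auto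
  qed
qed

lemma two_le_pow: "1 \<le> n \<Longrightarrow> (2::nat) \<le> 2^n"
  by (cases n) auto

lemma pm1_top1: "pm1 (Suc n) (2^n + 1) = -1"
proof -
  have "popcount (0 + 2^n * 1) = popcount 0 + popcount 1" by (rule pc_add) simp
  moreover have "popcount 1 = 1" using pc_rec[of 1] by simp
  ultimately show ?thesis by (simp add: pm1_val sg_def)
qed

lemma pm1_top2: "1 \<le> n \<Longrightarrow> pm1 (Suc n) (2^n + 2) = 1"
proof -
  assume n: "1 \<le> n"
  have "(1::nat) < 2^n" using two_le_pow[OF n] by simp
  then have "popcount (1 + 2^n * 1) = popcount 1 + popcount 1" by (rule pc_add)
  moreover have "popcount 1 = 1" using pc_rec[of 1] by simp
  moreover have "(2::nat) \<le> 2^n" using two_le_pow[OF n] .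
  ultimately show ?thesis by (simp add: pm1_val sg_def add.commute)
qed

definition Sv :: "nat \<Rightarrow> (nat \<Rightarrow> int) \<Rightarrow> bool" where
  "Sv k v \<longleftrightarrow> (\<exists>n f. 1 \<le> n \<and> pmap (2^n) k f \<and> act HZ (2^n) k f (pm1 n) = v)"

lemma Sv_zero: "Sv k (\<lambda>i. 0)"
proof -
  have "act HZ (2^1) k (\<lambda>x. 0) (pm1 1) = (\<lambda>i. 0)" by (auto simp: HZ_simps)
  moreover have "pmap (2^1) k (\<lambda>x. 0)" by (simp add: pmap_def)
  ultimately show ?thesis unfolding Sv_def by blast
qed

lemma Sv_plus: "Sv k v \<Longrightarrow> 1 \<le> j \<Longrightarrow> j \<le> k \<Longrightarrow> Sv k (v(j := v j + 1))"
proof -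
  assume "Sv k v" "1 \<le> j" "j \<le> k"
  then obtain n f where nf: "1 \<le> n" "pmap (2^n) k f" "act HZ (2^n) k f (pm1 n) = v" unfolding Sv_def by blast
  have "(2::nat) \<le> 2^n" using two_le_pow[OF nf(1)] .
  then have "act HZ (2^Suc n) k (ext_map n f 2 j) (pm1 (Suc n)) = v(j := v j + 1)"
    using HZ_ext[OF nf(2), of 2 j] \<open>1 \<le> j\<close> \<open>j \<le> k\<close> nf pm1_top2 by simp
  moreover have "pmap (2^Suc n) k (ext_map n f 2 j)" using pmap_ext nf \<open>j \<le> k\<close> by blast
  ultimately show ?thesis unfolding Sv_def using nf(1) by (metis le_SucI)
qed

lemma Sv_minus: "Sv k v \<Longrightarrow> 1 \<le> j \<Longrightarrow> j \<le> k \<Longrightarrow> Sv k (v(j := v j - 1))"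
proof -
  assume "Sv k v" "1 \<le> j" "j \<le> k"
  then obtain n f where nf: "1 \<le> n" "pmap (2^n) k f" "act HZ (2^n) k f (pm1 n) = v" unfolding Sv_def by blast
  have "(1::nat) \<le> 2^n" by simp
  then have "act HZ (2^Suc n) k (ext_map n f 1 j) (pm1 (Suc n)) = v(j := v j - 1)"
    using HZ_ext[OF nf(2), of 1 j] \<open>1 \<le> j\<close> \<open>j \<le> k\<close> nf pm1_top1 by simp
  moreover have "pmap (2^Suc n) k (ext_map n f 1 j)" using pmap_ext nf \<open>j \<le> k\<close> by blast
  ultimately show ?thesis unfolding Sv_def using nf(1) by (metis le_SucI)
qed

lemma Sv_all_aux: "\<forall>v. v \<in> carr HZ k \<longrightarrow> (\<Sum>j\<in>{1..k}. nat \<bar>v j\<bar>) = m \<longrightarrow> Sv k v"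
proof (induction m)
  case 0
  show ?case
  proof (intro allI impI)
    fix v assume v: "v \<in> carr HZ k" "(\<Sum>j\<in>{1..k}. nat \<bar>v j\<bar>) = 0"
    have "\<forall>j\<in>{1..k}. nat \<bar>v j\<bar> = 0" using v(2) by simp
    then have "v = (\<lambda>i. 0)"
    proof -
      assume z: "\<forall>j\<in>{1..k}. nat \<bar>v j\<bar> = 0"
      show "v = (\<lambda>i. 0)"
      proof
        fix i
        show "v i = 0"
        proof (cases "1 \<le> i \<and> i \<le> k")
          case True then have "nat \<bar>v i\<bar> = 0" using z by simp
          then show ?thesis by simp
        next
          case False then have "i = 0 \<or> k < i" by auto
          then show ?thesis using v(1) unfolding HZ_simps by blast
        qed
      qed
    qed
    then show "Sv k v" using Sv_zero by simp
  qed
next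
  case (Suc m)
  show ?case
  proof (intro allI impI)
    fix v assume v: "v \<in> carr HZ k" "(\<Sum>j\<in>{1..k}. nat \<bar>v j\<bar>) = Suc m"
    have "\<not> (\<forall>j\<in>{1..k}. v j = 0)"
    proof
      assume "\<forall>j\<in>{1..k}. v j = 0"
      then have "(\<Sum>j\<in>{1..k}. nat \<bar>v j\<bar>) = 0" by simp
      then show False using v(2) by simp
    qed
    then obtain j where j: "j \<in> {1..k}" "v j \<noteq> 0" by blast
    have fin: "finite {1..k}" by simp
    show "Sv k v"
    proof (cases "v j > 0")
      case True
      define v' where "v' = v(j := v j - 1)"
      have "v' \<in> carr HZ k" using v(1) j unfolding v'_def by (auto simp: HZ_simps)
      moreover have "(\<Sum>i\<in>{1..k}. nat \<bar>v' i\<bar>) = m"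
      proof -
        have "(\<Sum>i\<in>{1..k}. nat \<bar>v i\<bar>) = nat \<bar>v j\<bar> + (\<Sum>i\<in>{1..k}-{j}. nat \<bar>v i\<bar>)"
          using sum.remove[OF fin j(1)] by simp
        moreover have "(\<Sum>i\<in>{1..k}. nat \<bar>v' i\<bar>) = nat \<bar>v' j\<bar> + (\<Sum>i\<in>{1..k}-{j}. nat \<bar>v' i\<bar>)"
          using sum.remove[OF fin j(1)] by simp
        moreover have "(\<Sum>i\<in>{1..k}-{j}. nat \<bar>v' i\<bar>) = (\<Sum>i\<in>{1..k}-{j}. nat \<bar>v i\<bar>)"
          unfolding v'_def by (rule sum.cong) auto
        ultimately show ?thesis using v(2) True unfolding v'_def by simp
      qed
      ultimately have "Sv k v'" using Suc.IH by blast
      then have "Sv k (v'(j := v' j + 1))" using Sv_plus j by auto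
      moreover have "v'(j := v' j + 1) = v" unfolding v'_def by auto
      ultimately show ?thesis by simp
    next
      case False
      then have neg: "v j < 0" using j by simp
      define v' where "v' = v(j := v j + 1)"
      have "v' \<in> carr HZ k" using v(1) j unfolding v'_def by (auto simp: HZ_simps)
      moreover have "(\<Sum>i\<in>{1..k}. nat \<bar>v' i\<bar>) = m"
      proof -
        have "(\<Sum>i\<in>{1..k}. nat \<bar>v i\<bar>) = nat \<bar>v j\<bar> + (\<Sum>i\<in>{1..k}-{j}. nat \<bar>v i\<bar>)"
          using sum.remove[OF fin j(1)] by simp
        moreover have "(\<Sum>i\<in>{1..k}. nat \<bar>v' i\<bar>) = nat \<bar>v' j\<bar> + (\<Sum>i\<in>{1..k}-{j}. nat \<bar>v' i\<bar>)"
          using sum.remove[OF fin j(1)] by simp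
        moreover have "(\<Sum>i\<in>{1..k}-{j}. nat \<bar>v' i\<bar>) = (\<Sum>i\<in>{1..k}-{j}. nat \<bar>v i\<bar>)"
          unfolding v'_def by (rule sum.cong) auto
        ultimately show ?thesis using v(2) neg unfolding v'_def by simp
      qed
      ultimately have "Sv k v'" using Suc.IH by blast
      then have "Sv k (v'(j := v' j - 1))" using Sv_minus j by auto
      moreover have "v'(j := v' j - 1) = v" unfolding v'_def by auto
      ultimately show ?thesis by simp
    qed
  qed
qed

lemma HZ_surj: "v \<in> carr HZ k \<Longrightarrow> \<exists>n f. 1 \<le> n \<and> pmap (2^n) k f \<and> act HZ (2^n) k f (pm1 n) = v"
  using Sv_all_aux[of k "\<Sum>j\<in>{1..k}. nat \<bar>v j\<bar>"] unfolding Sv_def by blast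




lemma fibre_bij:
  assumes fin: "finite X" and c: "\<And>y. card {x\<in>X. F x = y} = card {x\<in>X. G x = y}"
  shows "\<exists>\<pi>. bij_betw \<pi> X X \<and> (\<forall>x\<in>X. G (\<pi> x) = F x)"
proof -
  have "\<forall>y. \<exists>h. bij_betw h {x\<in>X. F x = y} {x\<in>X. G x = y}"
  proof
    fix y
    show "\<exists>h. bij_betw h {x\<in>X. F x = y} {x\<in>X. G x = y}"
      by (rule finite_same_card_bij) (use fin c in auto)
  qed
  then obtain b where b: "\<And>y. bij_betw (b y) {x\<in>X. F x = y} {x\<in>X. G x = y}" by metis
  define \<pi> where "\<pi> x = b (F x) x" for x
  have maps: "\<And>x. x \<in> X \<Longrightarrow> \<pi> x \<in> X \<and> G (\<pi> x) = F x"
  proof -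
    fix x assume "x \<in> X"
    then have "x \<in> {x'\<in>X. F x' = F x}" by simp
    then have "b (F x) x \<in> {x'\<in>X. G x' = F x}" using b[of "F x"] by (auto simp: bij_betw_def)
    then show "\<pi> x \<in> X \<and> G (\<pi> x) = F x" unfolding \<pi>_def by simp
  qed
  have "bij_betw \<pi> X X"
  proof (rule bij_betw_imageI)
    show "inj_on \<pi> X"
    proof (rule inj_onI)
      fix x x' assume xx: "x \<in> X" "x' \<in> X" "\<pi> x = \<pi> x'"
      then have "F x = F x'" using maps by metis
      then have "b (F x) x = b (F x) x'" using xx unfolding \<pi>_def by simp
      moreover have "inj_on (b (F x)) {x''\<in>X. F x'' = F x}" using b by (auto simp: bij_betw_def)
      ultimately show "x = x'" using xx \<open>F x = F x'\<close> by (auto dest: inj_onD)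
    qed
  next
    show "\<pi> ` X = X"
    proof
      show "\<pi> ` X \<subseteq> X" using maps by auto
    next
      show "X \<subseteq> \<pi> ` X"
      proof
        fix z assume z: "z \<in> X"
        then have "z \<in> {x\<in>X. G x = G z}" by simp
        then have "z \<in> b (G z) ` {x\<in>X. F x = G z}" using b[of "G z"] by (auto simp: bij_betw_def)
        then obtain x where x: "x \<in> X" "F x = G z" "z = b (G z) x" by auto
        then have "\<pi> x = z" unfolding \<pi>_def by simp
        then show "z \<in> \<pi> ` X" using x(1) by blast
      qed
    qed
  qed
  then show ?thesis using maps by blast
qed

lemma card_fibre_sum:
  assumes "finite X" "finite T" "F ` X \<subseteq> T"
  shows "card X = (\<Sum>y\<in>T. card {x\<in>X. F x = y})"
proof -
  have "(\<Sum>y\<in>T. \<Sum>x\<in>{x. x \<in> X \<and> F x = y}. (1::nat)) = (\<Sum>x\<in>X. 1)"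
    by (rule sum.group[OF assms])
  then show ?thesis by simp
qed

lemma fibre_count:
  assumes fin: "finite X" and c: "\<And>y. y \<noteq> y0 \<Longrightarrow> card {x\<in>X. F x = y} = card {x\<in>X. G x = y}"
  shows "card {x\<in>X. F x = y0} = card {x\<in>X. G x = y0}"
proof -
  define T where "T = F ` X \<union> G ` X \<union> {y0}"
  have fT: "finite T" "y0 \<in> T" using fin unfolding T_def by auto
  have "card X = (\<Sum>y\<in>T. card {x\<in>X. F x = y})" by (rule card_fibre_sum) (use fin fT in \<open>auto simp: T_def\<close>)
  moreover have "card X = (\<Sum>y\<in>T. card {x\<in>X. G x = y})" by (rule card_fibre_sum) (use fin fT in \<open>auto simp: T_def\<close>)
  moreover have "(\<Sum>y\<in>T. card {x\<in>X. F x = y}) = card {x\<in>X. F x = y0} + (\<Sum>y\<in>T-{y0}. card {x\<in>X. F x = y})"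
    using sum.remove[OF fT] by simp
  moreover have "(\<Sum>y\<in>T. card {x\<in>X. G x = y}) = card {x\<in>X. G x = y0} + (\<Sum>y\<in>T-{y0}. card {x\<in>X. G x = y})"
    using sum.remove[OF fT] by simp
  moreover have "(\<Sum>y\<in>T-{y0}. card {x\<in>X. F x = y}) = (\<Sum>y\<in>T-{y0}. card {x\<in>X. G x = y})"
    using c by (intro sum.cong) auto
  ultimately show ?thesis by linarith
qed

definition reduced :: "nat \<Rightarrow> (nat \<Rightarrow> nat) \<Rightarrow> bool" where
  "reduced N f \<longleftrightarrow> (\<forall>x y. 1 \<le> x \<longrightarrow> x \<le> N \<longrightarrow> 1 \<le> y \<longrightarrow> y \<le> N \<longrightarrow> f x = f y \<longrightarrow> f x \<noteq> 0 \<longrightarrow> sg x = sg y)"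

lemma HZ_act_val:
  assumes "1 \<le> j" "j \<le> k"
  shows "act HZ (2^n) k f (pm1 n) j =
    int (card {x\<in>{1..2^n}. f x = j \<and> sg x}) - int (card {x\<in>{1..2^n}. f x = j \<and> \<not> sg x})"
proof -
  have "act HZ (2^n) k f (pm1 n) j = (\<Sum>x\<in>{x. 1 \<le> x \<and> x \<le> 2^n \<and> f x = j}. pm1 n x)"
    using assms by (simp add: HZ_simps)
  also have "\<dots> = int (card {x\<in>{x. 1 \<le> x \<and> x \<le> 2^n \<and> f x = j}. sg x}) - int (card {x\<in>{x. 1 \<le> x \<and> x \<le> 2^n \<and> f x = j}. \<not> sg x})"
    by (rule sum_pm1) auto
  also have "{x\<in>{x. 1 \<le> x \<and> x \<le> 2^n \<and> f x = j}. sg x} = {x\<in>{1..2^n}. f x = j \<and> sg x}" by auto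
  also have "{x\<in>{x. 1 \<le> x \<and> x \<le> 2^n \<and> f x = j}. \<not> sg x} = {x\<in>{1..2^n}. f x = j \<and> \<not> sg x}" by auto
  finally show ?thesis .
qed

lemma reduced_zero:
  assumes "reduced N f" "j \<noteq> 0"
  shows "card {x\<in>{1..N}. f x = j \<and> sg x} = 0 \<or> card {x\<in>{1..N}. f x = j \<and> \<not> sg x} = 0"
proof (rule ccontr)
  assume "\<not> ?thesis"
  then have "{x\<in>{1..N}. f x = j \<and> sg x} \<noteq> {}" "{x\<in>{1..N}. f x = j \<and> \<not> sg x} \<noteq> {}"
    by (auto simp del: Collect_empty_eq)
  then obtain x y where xy: "x \<in> {1..N}" "f x = j" "sg x" "y \<in> {1..N}" "f y = j" "\<not> sg y"
    by blast
  have "sg x = sg y" using assms(1)[unfolded reduced_def, rule_format, of x y] xy assms(2) by auto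
  then show False using xy by simp
qed

lemma perm_exists:
  assumes f: "pmap (2^n) k f" and g: "pmap (2^n) k g"
    and rf: "reduced (2^n) f" and rg: "reduced (2^n) g"
    and e: "act HZ (2^n) k f (pm1 n) = act HZ (2^n) k g (pm1 n)"
  shows "\<exists>\<pi>. bij_betw \<pi> {1..2^n} {1..2^n} \<and> (\<forall>x\<in>{1..2^n}. sg (\<pi> x) = sg x \<and> g (\<pi> x) = f x)"
proof -
  let ?X = "{1..2^n::nat}"
  have nz: "\<And>j s. j \<noteq> 0 \<Longrightarrow> card {x\<in>?X. f x = j \<and> sg x = s} = card {x\<in>?X. g x = j \<and> sg x = s}"
  proof -
    fix j s assume j: "(j::nat) \<noteq> 0"
    show "card {x\<in>?X. f x = j \<and> sg x = s} = card {x\<in>?X. g x = j \<and> sg x = s}"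
    proof (cases "j \<le> k")
      case True
      have v: "int (card {x\<in>?X. f x = j \<and> sg x}) - int (card {x\<in>?X. f x = j \<and> \<not> sg x})
        = int (card {x\<in>?X. g x = j \<and> sg x}) - int (card {x\<in>?X. g x = j \<and> \<not> sg x})"
        using HZ_act_val[of j k n f] HZ_act_val[of j k n g] e j True by simp
      have z1: "card {x\<in>?X. f x = j \<and> sg x} = 0 \<or> card {x\<in>?X. f x = j \<and> \<not> sg x} = 0"
        by (rule reduced_zero[OF rf j])
      have z2: "card {x\<in>?X. g x = j \<and> sg x} = 0 \<or> card {x\<in>?X. g x = j \<and> \<not> sg x} = 0"
        by (rule reduced_zero[OF rg j])
      have "card {x\<in>?X. f x = j \<and> sg x} = card {x\<in>?X. g x = j \<and> sg x} \<and>
            card {x\<in>?X. f x = j \<and> \<not> sg x} = card {x\<in>?X. g x = j \<and> \<not> sg x}"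
      proof -
        have gen: "\<And>P1 M1 P2 M2::nat. int P1 - int M1 = int P2 - int M2 \<Longrightarrow> (P1 = 0 \<or> M1 = 0) \<Longrightarrow> (P2 = 0 \<or> M2 = 0) \<Longrightarrow> P1 = P2 \<and> M1 = M2"
          by auto
        show ?thesis by (rule gen[OF v z1 z2])
      qed
      then show ?thesis by (cases s) (simp_all only: simp_thms)
    next
      case False
      have "{x\<in>?X. f x = j \<and> sg x = s} = {}" "{x\<in>?X. g x = j \<and> sg x = s} = {}"
        using f g False unfolding pmap_def by force+
      then show ?thesis by (metis card.empty)
    qed
  qed
  have zero: "\<And>s. card {x\<in>?X. f x = 0 \<and> sg x = s} = card {x\<in>?X. g x = 0 \<and> sg x = s}"
  proof -
    fix s
    have "card {x\<in>{x\<in>?X. sg x = s}. f x = 0} = card {x\<in>{x\<in>?X. sg x = s}. g x = 0}"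
    proof (rule fibre_count)
      fix y assume "(y::nat) \<noteq> 0"
      then have "card {x\<in>?X. f x = y \<and> sg x = s} = card {x\<in>?X. g x = y \<and> sg x = s}" by (rule nz)
      moreover have "{x\<in>{x\<in>?X. sg x = s}. f x = y} = {x\<in>?X. f x = y \<and> sg x = s}"
        "{x\<in>{x\<in>?X. sg x = s}. g x = y} = {x\<in>?X. g x = y \<and> sg x = s}" by auto
      ultimately show "card {x\<in>{x\<in>?X. sg x = s}. f x = y} = card {x\<in>{x\<in>?X. sg x = s}. g x = y}" by simp
    qed simp
    moreover have "{x\<in>{x\<in>?X. sg x = s}. f x = 0} = {x\<in>?X. f x = 0 \<and> sg x = s}"
        "{x\<in>{x\<in>?X. sg x = s}. g x = 0} = {x\<in>?X. g x = 0 \<and> sg x = s}" by auto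
    ultimately show "card {x\<in>?X. f x = 0 \<and> sg x = s} = card {x\<in>?X. g x = 0 \<and> sg x = s}" by simp
  qed
  have "\<And>y. card {x\<in>?X. (f x, sg x) = y} = card {x\<in>?X. (g x, sg x) = y}"
  proof -
    fix y :: "nat \<times> bool"
    obtain j s where y: "y = (j, s)" by (cases y)
    show "card {x\<in>?X. (f x, sg x) = y} = card {x\<in>?X. (g x, sg x) = y}"
      using nz[of j s] zero[of s] unfolding y by (cases "j = 0") auto
  qed
  then obtain \<pi> where "bij_betw \<pi> ?X ?X" "\<forall>x\<in>?X. (g (\<pi> x), sg (\<pi> x)) = (f x, sg x)"
    using fibre_bij[of ?X "\<lambda>x. (f x, sg x)" "\<lambda>x. (g x, sg x)"] by auto
  then show ?thesis by auto
qed

lemma HZ_merge: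
  assumes f: "pmap (2^n) k f" and ab: "a \<in> {1..2^n}" "b \<in> {1..2^n}" "a \<noteq> b"
    and s: "sg a \<noteq> sg b" and fab: "f a = f b"
  shows "act HZ (2^n) k (f(a := 0, b := 0)) (pm1 n) = act HZ (2^n) k f (pm1 n)"
proof
  fix j
  show "act HZ (2^n) k (f(a := 0, b := 0)) (pm1 n) j = act HZ (2^n) k f (pm1 n) j"
  proof (cases "1 \<le> j \<and> j \<le> k")
    case True
    let ?A = "{x. 1 \<le> x \<and> x \<le> 2^n \<and> f x = j}"
    let ?B = "{x. 1 \<le> x \<and> x \<le> 2^n \<and> (f(a := 0, b := 0)) x = j}"
    show ?thesis
    proof (cases "f a = j")
      case True2: True
      have AB: "?A = ?B \<union> {a, b}" "?B \<inter> {a, b} = {}" using ab fab True2 True by auto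
      have fin: "finite ?B" by auto
      have "(\<Sum>x\<in>?A. pm1 n x) = (\<Sum>x\<in>?B. pm1 n x) + (\<Sum>x\<in>{a,b}. pm1 n x)"
        unfolding AB(1) by (rule sum.union_disjoint) (use AB fin in auto)
      moreover have "(\<Sum>x\<in>{a,b}. pm1 n x) = 0" using ab s by (auto simp: pm1_val)
      ultimately show ?thesis using True unfolding HZ_simps by simp
    next
      case False2: False
      then have "?A = ?B" using fab True by auto
      then show ?thesis using True unfolding HZ_simps by simp
    qed
  next
    case False
    have "\<And>u n' h. act HZ n' k h u j = 0" using False by (auto simp: HZ_simps)
    then show ?thesis by metis
  qed
qed




locale fdl =
  fixes R :: "'a gring" and r :: 'a
  assumes DG: "discrete_gamma_ring R" and FD: "formal_difference_law R r"
begin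

lemma c0: "carr R 0 = {bpt R 0}" using DG unfolding discrete_gamma_ring_def by (elim conjE) blast
lemma act_carr: "pmap n m f \<Longrightarrow> x \<in> carr R n \<Longrightarrow> act R n m f x \<in> carr R m"
  using DG unfolding discrete_gamma_ring_def by (elim conjE) blast
lemma act_bpt: "pmap n m f \<Longrightarrow> act R n m f (bpt R n) = bpt R m"
  using DG unfolding discrete_gamma_ring_def by (elim conjE) blast
lemma act_cong: "(\<And>i. i \<le> n \<Longrightarrow> f i = g i) \<Longrightarrow> x \<in> carr R n \<Longrightarrow> act R n m f x = act R n m g x"
  using DG unfolding discrete_gamma_ring_def by (elim conjE) blast
lemma act_id: "x \<in> carr R n \<Longrightarrow> act R n n id x = x"
  using DG unfolding discrete_gamma_ring_def by (elim conjE) blast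
lemma act_comp: "pmap n m f \<Longrightarrow> pmap m l g \<Longrightarrow> x \<in> carr R n \<Longrightarrow>
        act R m l g (act R n m f x) = act R n l (g \<circ> f) x"
  by (rule DG[unfolded discrete_gamma_ring_def, THEN conjunct2, THEN conjunct2, THEN conjunct2, THEN conjunct2, THEN conjunct2, THEN conjunct2, THEN conjunct1, rule_format])
lemma one_carr: "one R \<in> carr R 1"
  using DG unfolding discrete_gamma_ring_def by (elim conjE) blast
lemma mul_carr: "x \<in> carr R n \<Longrightarrow> y \<in> carr R m \<Longrightarrow> mul R n m x y \<in> carr R (n * m)"
  by (rule DG[unfolded discrete_gamma_ring_def, THEN conjunct2, THEN conjunct2, THEN conjunct2, THEN conjunct2, THEN conjunct2, THEN conjunct2, THEN conjunct2, THEN conjunct2, THEN conjunct1, rule_format])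
lemma mul_act: "pmap n m f \<Longrightarrow> pmap n' m' g \<Longrightarrow> x \<in> carr R n \<Longrightarrow> y \<in> carr R n' \<Longrightarrow>
        mul R m m' (act R n m f x) (act R n' m' g y) =
        act R (n * n') (m * m') (smash_map n m f g) (mul R n n' x y)"
  by (rule DG[unfolded discrete_gamma_ring_def, THEN conjunct2, THEN conjunct2, THEN conjunct2, THEN conjunct2, THEN conjunct2, THEN conjunct2, THEN conjunct2, THEN conjunct2, THEN conjunct2, THEN conjunct2, THEN conjunct2, THEN conjunct1, rule_format])
lemma mul_assoc: "x \<in> carr R n \<Longrightarrow> y \<in> carr R m \<Longrightarrow> z \<in> carr R l \<Longrightarrow>
        mul R (n * m) l (mul R n m x y) z = mul R n (m * l) x (mul R m l y z)"
  by (rule DG[unfolded discrete_gamma_ring_def, THEN conjunct2, THEN conjunct2, THEN conjunct2, THEN conjunct2, THEN conjunct2, THEN conjunct2, THEN conjunct2, THEN conjunct2, THEN conjunct2, THEN conjunct2, THEN conjunct2, THEN conjunct2, THEN conjunct1, rule_format])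
lemma mul_one: "x \<in> carr R n \<Longrightarrow> mul R 1 n (one R) x = x \<and> mul R n 1 x (one R) = x"
  by (rule DG[unfolded discrete_gamma_ring_def, THEN conjunct2, THEN conjunct2, THEN conjunct2, THEN conjunct2, THEN conjunct2, THEN conjunct2, THEN conjunct2, THEN conjunct2, THEN conjunct2, THEN conjunct2, THEN conjunct2, THEN conjunct2, THEN conjunct2, rule_format])

lemma r_carr: "r \<in> carr R 2" using FD unfolding formal_difference_law_def by (elim conjE) blast
lemma r_p22: "act R 2 1 (pmap_p 2 2) r = one R" using FD unfolding formal_difference_law_def by (elim conjE) blast
lemma r_perm: "1 \<le> k \<Longrightarrow> special_perm k \<pi> \<Longrightarrow> act R (2 ^ k) (2 ^ k) \<pi> (gpow R r k) = gpow R r k"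
  using FD unfolding formal_difference_law_def by (elim conjE) blast
lemma r_merge: "1 \<le> k \<Longrightarrow> 1 \<le> i \<Longrightarrow> i < j \<Longrightarrow> j \<le> 2 ^ k \<Longrightarrow>
        ((i \<in> Aplus k \<and> j \<in> Aminus k) \<or> (i \<in> Aminus k \<and> j \<in> Aplus k)) \<Longrightarrow>
        1 \<le> l \<Longrightarrow> l \<le> 2 ^ k - 1 \<Longrightarrow>
        act R (2 ^ k) (2 ^ k - 1) (pmap_s (2 ^ k) i j l) (gpow R r k) =
        act R (2 ^ k - 2) (2 ^ k - 1) (pmap_d (2 ^ k - 1) l)
          (act R (2 ^ k - 1) (2 ^ k - 2) (pmap_p (2 ^ k - 1) i)
            (act R (2 ^ k) (2 ^ k - 1) (pmap_p (2 ^ k) j) (gpow R r k)))"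
  using FD unfolding formal_difference_law_def by (elim conjE) blast

abbreviation G where "G n \<equiv> gpow R r n"

lemma gpow_carr: "G n \<in> carr R (2^n)"
proof (induction n)
  case 0 then show ?case using one_carr by simp
next
  case (Suc n)
  have "mul R (2^n) 2 (G n) r \<in> carr R (2^n * 2)" by (rule mul_carr[OF Suc.IH r_carr])
  then show ?case by (simp add: mult.commute)
qed

lemma gpow_add: "G (p + q) = mul R (2^p) (2^q) (G p) (G q)"
proof (induction q)
  case 0 then show ?case using mul_one[OF gpow_carr[of p]] by simp
next
  case (Suc q)
  have "G (p + Suc q) = mul R (2^(p+q)) 2 (G (p+q)) r" by simp
  also have "\<dots> = mul R (2^p * 2^q) 2 (mul R (2^p) (2^q) (G p) (G q)) r"
    using Suc.IH by (simp add: power_add)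
  also have "\<dots> = mul R (2^p) (2^q * 2) (G p) (mul R (2^q) 2 (G q) r)"
    by (rule mul_assoc[OF gpow_carr gpow_carr r_carr])
  also have "\<dots> = mul R (2^p) (2^Suc q) (G p) (G (Suc q))" by (simp add: mult.commute)
  finally show ?case .
qed

lemma pmap_comp: "pmap n m f \<Longrightarrow> pmap m l g \<Longrightarrow> pmap n l (g \<circ> f)"
  by (auto simp: pmap_def)

lemma R_lift:
  assumes f: "pmap (2^n) k f"
  shows "act R (2^Suc n) k (f \<circ> qn n) (G (Suc n)) = act R (2^n) k f (G n)"
proof -
  have pq: "pmap (2^Suc n) (2^n) (qn n)" by (auto simp: pmap_def qn_def)
  have pid: "pmap (2^n) (2^n) id" by (simp add: pmap_def)
  have pp: "pmap 2 1 (pmap_p 2 2)" by (simp add: pmap_def pmap_p_def)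
  have "mul R (2^n) 1 (act R (2^n) (2^n) id (G n)) (act R 2 1 (pmap_p 2 2) r)
        = act R (2^n * 2) (2^n * 1) (smash_map (2^n) (2^n) id (pmap_p 2 2)) (mul R (2^n) 2 (G n) r)"
    by (rule mul_act[OF pid pp gpow_carr r_carr])
  moreover have "mul R (2^n) 1 (act R (2^n) (2^n) id (G n)) (act R 2 1 (pmap_p 2 2) r) = G n"
    using act_id[OF gpow_carr] r_p22 mul_one[OF gpow_carr] by simp
  moreover have "act R (2^n * 2) (2^n * 1) (smash_map (2^n) (2^n) id (pmap_p 2 2)) (mul R (2^n) 2 (G n) r)
     = act R (2^Suc n) (2^n) (qn n) (G (Suc n))"
  proof -
    have "act R (2^n * 2) (2^n) (smash_map (2^n) (2^n) id (pmap_p 2 2)) (G (Suc n))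
        = act R (2^n * 2) (2^n) (qn n) (G (Suc n))"
    proof (rule act_cong)
      fix x :: nat assume x: "x \<le> 2^n * 2"
      show "smash_map (2^n) (2^n) id (pmap_p 2 2) x = qn n x"
      proof (cases "x = 0")
        case True then show ?thesis by (simp add: smash_map_def qn_def)
      next
        case False
        then obtain y where y: "x = Suc y" by (cases x) auto
        have "y < 2 * 2^n" using x y by simp
        then have d: "y div 2^n < 2" by (simp add: less_mult_imp_div_less)
        show ?thesis
        proof (cases "y < 2^n")
          case True
          then show ?thesis using y by (simp add: smash_map_def qn_def pmap_p_def Let_def)
        next
          case False
          then have "0 < y div 2^n" by (simp add: div_greater_zero_iff)
          then have "y div 2^n = 1" using d by linarith
          then show ?thesis using y False by (simp add: smash_map_def qn_def pmap_p_def Let_def)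
        qed
      qed
    qed (use gpow_carr[of "Suc n"] in \<open>simp add: mult.commute\<close>)
    then show ?thesis by (simp add: mult.commute)
  qed
  ultimately have q: "act R (2^Suc n) (2^n) (qn n) (G (Suc n)) = G n" by simp
  have "act R (2^Suc n) k (f \<circ> qn n) (G (Suc n)) = act R (2^n) k f (act R (2^Suc n) (2^n) (qn n) (G (Suc n)))"
    using act_comp[OF pq f gpow_carr] by simp
  then show ?thesis using q by simp
qed

end



definition sinv :: "nat \<Rightarrow> nat \<Rightarrow> nat \<Rightarrow> nat" where
  "sinv a b y = (if y = 0 then 0 else if y = 1 then a else
     (if y - 1 < a then y - 1 else if y < b then y else y + 1))"

lemma s_nonpair: "0 < x \<Longrightarrow> x \<noteq> a \<Longrightarrow> x \<noteq> b \<Longrightarrow> a < b \<Longrightarrow> 0 < a \<Longrightarrow>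
  pmap_s N a b 1 x = x - ((if a < x then 1 else 0) + (if b < x then 1 else 0)) + 1"
  unfolding pmap_s_def Let_def by auto

lemma s_pair: "0 < a \<Longrightarrow> pmap_s N a b 1 a = 1" "0 < b \<Longrightarrow> pmap_s N a b 1 b = 1"
  unfolding pmap_s_def by auto

lemma sinv_s: "0 < x \<Longrightarrow> x \<noteq> a \<Longrightarrow> x \<noteq> b \<Longrightarrow> a < b \<Longrightarrow> 0 < a \<Longrightarrow>
  sinv a b (pmap_s N a b 1 x) = x"
  using s_nonpair[of x a b N] unfolding sinv_def by auto

lemma s_le: "x \<le> N \<Longrightarrow> a < b \<Longrightarrow> 0 < a \<Longrightarrow> b \<le> N \<Longrightarrow> pmap_s N a b 1 x \<le> N - 1"
proof -
  assume x: "x \<le> N" and ab: "a < b" "0 < a" "b \<le> N"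
  show ?thesis
  proof (cases "x = 0 \<or> x = a \<or> x = b")
    case True then show ?thesis using ab unfolding pmap_s_def by auto
  next
    case False then show ?thesis using s_nonpair[of x a b N] x ab by auto
  qed
qed

lemma sinv_le: "y \<le> N - 1 \<Longrightarrow> a < b \<Longrightarrow> b \<le> N \<Longrightarrow> sinv a b y \<le> N"
  unfolding sinv_def by auto

lemma dpp: "a < b \<Longrightarrow> 0 < a \<Longrightarrow> b \<le> N \<Longrightarrow>
  pmap_d (N - 1) 1 (pmap_p (N - 1) a (pmap_p N b x)) = (if x = a \<or> x = b then 0 else pmap_s N a b 1 x)"
  unfolding pmap_d_def pmap_p_def pmap_s_def Let_def by auto




context fdl
begin

lemma R_merge0:
  assumes n: "1 \<le> n" and f: "pmap (2^n) k f" and ab: "1 \<le> a" "a < b" "b \<le> 2^n"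
    and s: "sg a \<noteq> sg b" and fab: "f a = f b"
  shows "act R (2^n) k (f(a := 0, b := 0)) (G n) = act R (2^n) k f (G n)"
proof -
  define N where "N = (2::nat)^n"
  have N2: "2 \<le> N" unfolding N_def using two_le_pow[OF n] .
  have abN: "0 < a" "a < b" "b \<le> N" using ab unfolding N_def by auto
  define s where "s = pmap_s N a b 1"
  define h where "h = f \<circ> sinv a b"
  have ps: "pmap N (N - 1) s" unfolding pmap_def s_def using s_le[of _ N a b] abN by (auto simp: pmap_s_def)
  have ph: "pmap (N - 1) k h" unfolding pmap_def h_def
    using f sinv_le[of _ N a b] abN unfolding N_def[symmetric] pmap_def by (auto simp: sinv_def)
  have pb: "pmap N (N - 1) (pmap_p N b)" unfolding pmap_def pmap_p_def using abN by auto
  have pa: "pmap (N - 1) (N - 2) (pmap_p (N - 1) a)" unfolding pmap_def pmap_p_def using abN by auto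
  have pd: "pmap (N - 2) (N - 1) (pmap_d (N - 1) 1)" unfolding pmap_def pmap_d_def using N2 by auto
  have GN: "G n \<in> carr R N" unfolding N_def by (rule gpow_carr)
  have hs: "\<And>x. x \<le> N \<Longrightarrow> (h \<circ> s) x = f x"
  proof -
    fix x assume "x \<le> N"
    show "(h \<circ> s) x = f x"
    proof (cases "x = 0 \<or> x = a \<or> x = b")
      case True
      then show ?thesis using abN f fab s_pair[of a N b] s_pair[of b N a]
        unfolding h_def s_def N_def[symmetric] pmap_def by (auto simp: sinv_def pmap_s_def)
    next
      case False
      then show ?thesis using sinv_s[of x a b N] abN unfolding h_def s_def by auto
    qed
  qed
  have hd: "\<And>x. x \<le> N \<Longrightarrow> (h \<circ> (pmap_d (N - 1) 1 \<circ> (pmap_p (N - 1) a \<circ> pmap_p N b))) x = (f(a := 0, b := 0)) x"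
  proof -
    fix x assume "x \<le> N"
    show "(h \<circ> (pmap_d (N - 1) 1 \<circ> (pmap_p (N - 1) a \<circ> pmap_p N b))) x = (f(a := 0, b := 0)) x"
    proof (cases "x = a \<or> x = b")
      case True
      then show ?thesis using dpp[of a b N x] abN f unfolding h_def pmap_def N_def[symmetric]
        by (auto simp: sinv_def)
    next
      case False
      then show ?thesis using dpp[of a b N x] abN hs[OF \<open>x \<le> N\<close>] unfolding s_def by auto
    qed
  qed
  have Aab: "(a \<in> Aplus n \<and> b \<in> Aminus n) \<or> (a \<in> Aminus n \<and> b \<in> Aplus n)"
    using s ab unfolding Aplus_def Aminus_def sg_def by auto
  have mer: "act R N (N - 1) s (G n) = act R (N - 2) (N - 1) (pmap_d (N - 1) 1)
          (act R (N - 1) (N - 2) (pmap_p (N - 1) a) (act R N (N - 1) (pmap_p N b) (G n)))"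
    unfolding s_def N_def using r_merge[OF n, of a b 1] ab Aab two_le_pow[OF n] by auto
  have "act R N k f (G n) = act R N k (h \<circ> s) (G n)"
    by (rule act_cong[OF _ GN]) (metis hs comp_apply)
  also have "\<dots> = act R (N - 1) k h (act R N (N - 1) s (G n))"
    by (rule act_comp[OF ps ph GN, symmetric])
  also have "\<dots> = act R (N - 1) k h (act R N (N - 1) (pmap_d (N - 1) 1 \<circ> (pmap_p (N - 1) a \<circ> pmap_p N b)) (G n))"
    unfolding mer
    using act_comp[OF pb pa GN] act_comp[OF pmap_comp[OF pb pa] pd GN] by simp
  also have "\<dots> = act R N k (h \<circ> (pmap_d (N - 1) 1 \<circ> (pmap_p (N - 1) a \<circ> pmap_p N b))) (G n)"
    by (rule act_comp[OF pmap_comp[OF pmap_comp[OF pb pa] pd] ph GN])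
  also have "\<dots> = act R N k (f(a := 0, b := 0)) (G n)"
    by (rule act_cong[OF _ GN]) (metis hd)
  finally show ?thesis unfolding N_def by simp
qed

end



context fdl
begin

lemma R_merge:
  assumes n: "1 \<le> n" and f: "pmap (2^n) k f" and ab: "a \<in> {1..2^n}" "b \<in> {1..2^n}" "a \<noteq> b"
    and s: "sg a \<noteq> sg b" and fab: "f a = f b"
  shows "act R (2^n) k (f(a := 0, b := 0)) (G n) = act R (2^n) k f (G n)"
proof (cases "a < b")
  case True then show ?thesis using R_merge0[OF n f, of a b] ab s fab by auto
next
  case False
  then have "b < a" using ab by auto
  then have "act R (2^n) k (f(b := 0, a := 0)) (G n) = act R (2^n) k f (G n)"
    using R_merge0[OF n f, of b a] ab s fab by auto
  moreover have "f(b := 0, a := 0) = f(a := 0, b := 0)" using ab by (auto simp: fun_upd_twist)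
  ultimately show ?thesis by simp
qed

lemma reduce_aux:
  assumes n: "1 \<le> n"
  shows "\<forall>f. pmap (2^n) k f \<longrightarrow> card {x\<in>{1..2^n}. f x \<noteq> 0} = m \<longrightarrow>
    (\<exists>f'. pmap (2^n) k f' \<and> reduced (2^n) f' \<and> act HZ (2^n) k f' (pm1 n) = act HZ (2^n) k f (pm1 n)
        \<and> act R (2^n) k f' (G n) = act R (2^n) k f (G n))"
proof (induction m rule: less_induct)
  case (less m)
  show ?case
  proof (intro allI impI)
    fix f assume f: "pmap (2^n) k f" and m: "card {x\<in>{1..2^n}. f x \<noteq> 0} = m"
    show "\<exists>f'. pmap (2^n) k f' \<and> reduced (2^n) f' \<and> act HZ (2^n) k f' (pm1 n) = act HZ (2^n) k f (pm1 n)
        \<and> act R (2^n) k f' (G n) = act R (2^n) k f (G n)"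
    proof (cases "reduced (2^n) f")
      case True then show ?thesis using f by blast
    next
      case False
      then obtain a b where ab: "a \<in> {1..2^n}" "b \<in> {1..2^n}" "f a = f b" "f a \<noteq> 0" "sg a \<noteq> sg b"
        unfolding reduced_def by auto
      then have anb: "a \<noteq> b" by auto
      define f' where "f' = f(a := 0, b := 0)"
      have pf': "pmap (2^n) k f'" using f unfolding f'_def pmap_def by auto
      have sub: "{x\<in>{1..2^n}. f' x \<noteq> 0} \<subset> {x\<in>{1..2^n}. f x \<noteq> 0}"
        using ab unfolding f'_def by auto
      have "card {x\<in>{1..2^n}. f' x \<noteq> 0} < m" unfolding m[symmetric]
        by (rule psubset_card_mono[OF _ sub]) simp
      then obtain f'' where f'': "pmap (2^n) k f''" "reduced (2^n) f''"
        "act HZ (2^n) k f'' (pm1 n) = act HZ (2^n) k f' (pm1 n)" "act R (2^n) k f'' (G n) = act R (2^n) k f' (G n)"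
        using less.IH pf' by blast
      have "act HZ (2^n) k f' (pm1 n) = act HZ (2^n) k f (pm1 n)"
        unfolding f'_def by (rule HZ_merge[OF f ab(1,2) anb ab(5,3)])
      moreover have "act R (2^n) k f' (G n) = act R (2^n) k f (G n)"
        unfolding f'_def by (rule R_merge[OF n f ab(1,2) anb ab(5,3)])
      ultimately show ?thesis using f'' by auto
    qed
  qed
qed

lemma reduce:
  assumes n: "1 \<le> n" and f: "pmap (2^n) k f"
  shows "\<exists>f'. pmap (2^n) k f' \<and> reduced (2^n) f' \<and> act HZ (2^n) k f' (pm1 n) = act HZ (2^n) k f (pm1 n)
        \<and> act R (2^n) k f' (G n) = act R (2^n) k f (G n)"
  using reduce_aux[OF n] f by blast

lemma R_perm_apply:
  assumes n: "1 \<le> n" and f: "pmap (2^n) k f" and g: "pmap (2^n) k g"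
    and bij: "bij_betw \<pi> {1..2^n} {1..2^n}" and pr: "\<forall>x\<in>{1..2^n}. sg (\<pi> x) = sg x \<and> g (\<pi> x) = f x"
  shows "act R (2^n) k f (G n) = act R (2^n) k g (G n)"
proof -
  define \<pi>' where "\<pi>' x = (if x = 0 then 0 else \<pi> x)" for x
  have bij': "bij_betw \<pi>' {1..2^n} {1..2^n}" using bij by (rule bij_betw_cong[THEN iffD1, rotated]) (auto simp: \<pi>'_def)
  have Ap: "\<And>s. {x\<in>{1..2^n}. sg x = s} \<subseteq> \<pi>' ` {x\<in>{1..2^n}. sg x = s} \<and> \<pi>' ` {x\<in>{1..2^n}. sg x = s} \<subseteq> {x\<in>{1..2^n}. sg x = s}"
  proof
    fix s
    show "{x\<in>{1..2^n}. sg x = s} \<subseteq> \<pi>' ` {x\<in>{1..2^n}. sg x = s}"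
    proof
      fix z assume z: "z \<in> {x\<in>{1..2^n}. sg x = s}"
      then have "z \<in> \<pi>' ` {1..2^n}" using bij' by (auto simp: bij_betw_def)
      then obtain x where x: "x \<in> {1..2^n}" "z = \<pi>' x" by auto
      then have "sg x = s" using z pr by (auto simp: \<pi>'_def)
      then show "z \<in> \<pi>' ` {x\<in>{1..2^n}. sg x = s}" using x by auto
    qed
    show "\<pi>' ` {x\<in>{1..2^n}. sg x = s} \<subseteq> {x\<in>{1..2^n}. sg x = s}"
      using pr bij' by (auto simp: bij_betw_def \<pi>'_def)
  qed
  have AP: "Aplus n = {x\<in>{1..2^n}. sg x = True}" "Aminus n = {x\<in>{1..2^n}. sg x = False}"
    unfolding Aplus_def Aminus_def sg_def by auto
  have sp: "special_perm n \<pi>'"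
    unfolding special_perm_def using bij' Ap[of True] Ap[of False] unfolding AP by (auto simp: \<pi>'_def)
  have pp: "pmap (2^n) (2^n) \<pi>'" using bij' unfolding pmap_def bij_betw_def \<pi>'_def by force
  have "act R (2^n) k g (G n) = act R (2^n) k g (act R (2^n) (2^n) \<pi>' (G n))"
    using r_perm[OF n sp] by simp
  also have "\<dots> = act R (2^n) k (g \<circ> \<pi>') (G n)" by (rule act_comp[OF pp g gpow_carr])
  also have "\<dots> = act R (2^n) k f (G n)"
  proof (rule act_cong[OF _ gpow_carr])
    fix i :: nat assume "i \<le> 2^n"
    then show "(g \<circ> \<pi>') i = f i" using pr f g unfolding pmap_def \<pi>'_def by (cases "i = 0") auto
  qed
  finally show ?thesis by simp
qed

lemma WD_same:
  assumes n: "1 \<le> n" and f: "pmap (2^n) k f" and g: "pmap (2^n) k g"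
    and e: "act HZ (2^n) k f (pm1 n) = act HZ (2^n) k g (pm1 n)"
  shows "act R (2^n) k f (G n) = act R (2^n) k g (G n)"
proof -
  obtain f' where f': "pmap (2^n) k f'" "reduced (2^n) f'" "act HZ (2^n) k f' (pm1 n) = act HZ (2^n) k f (pm1 n)"
      "act R (2^n) k f' (G n) = act R (2^n) k f (G n)" using reduce[OF n f] by blast
  obtain g' where g': "pmap (2^n) k g'" "reduced (2^n) g'" "act HZ (2^n) k g' (pm1 n) = act HZ (2^n) k g (pm1 n)"
      "act R (2^n) k g' (G n) = act R (2^n) k g (G n)" using reduce[OF n g] by blast
  obtain \<pi> where \<pi>: "bij_betw \<pi> {1..2^n} {1..2^n}" "\<forall>x\<in>{1..2^n}. sg (\<pi> x) = sg x \<and> g' (\<pi> x) = f' x"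
    using perm_exists[OF f'(1) g'(1) f'(2) g'(2)] f'(3) g'(3) e by auto
  show ?thesis using R_perm_apply[OF n f'(1) g'(1) \<pi>] f'(4) g'(4) by simp
qed

lemma lift_iter:
  assumes f: "pmap (2^n) k f"
  shows "\<exists>f'. pmap (2^(n+d)) k f' \<and> act HZ (2^(n+d)) k f' (pm1 (n+d)) = act HZ (2^n) k f (pm1 n)
     \<and> act R (2^(n+d)) k f' (G (n+d)) = act R (2^n) k f (G n)"
proof (induction d)
  case 0 then show ?case using f by auto
next
  case (Suc d)
  then obtain f' where f': "pmap (2^(n+d)) k f'" "act HZ (2^(n+d)) k f' (pm1 (n+d)) = act HZ (2^n) k f (pm1 n)"
     "act R (2^(n+d)) k f' (G (n+d)) = act R (2^n) k f (G n)" by blast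
  have "pmap (2^Suc (n+d)) k (f' \<circ> qn (n+d))" by (rule pmap_lift[OF f'(1)])
  moreover have "act HZ (2^Suc (n+d)) k (f' \<circ> qn (n+d)) (pm1 (Suc (n+d))) = act HZ (2^n) k f (pm1 n)"
    using HZ_lift[OF f'(1)] f'(2) by simp
  moreover have "act R (2^Suc (n+d)) k (f' \<circ> qn (n+d)) (G (Suc (n+d))) = act R (2^n) k f (G n)"
    using R_lift[OF f'(1)] f'(3) by simp
  ultimately show ?case by (metis add_Suc_right)
qed

lemma WD:
  assumes f: "pmap (2^n) k f" and g: "pmap (2^m) k g"
    and e: "act HZ (2^n) k f (pm1 n) = act HZ (2^m) k g (pm1 m)"
  shows "act R (2^n) k f (G n) = act R (2^m) k g (G m)"
proof -
  define L where "L = n + (m + 1)"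
  have eqL: "n + (m + 1) = L" "m + (n + 1) = L" unfolding L_def by simp_all
  have L1: "1 \<le> L" unfolding L_def by simp
  obtain f' where f': "pmap (2^L) k f'" "act HZ (2^L) k f' (pm1 L) = act HZ (2^n) k f (pm1 n)"
     "act R (2^L) k f' (G L) = act R (2^n) k f (G n)" using lift_iter[OF f, of "m+1", unfolded eqL] by blast
  obtain g' where g': "pmap (2^L) k g'" "act HZ (2^L) k g' (pm1 L) = act HZ (2^m) k g (pm1 m)"
     "act R (2^L) k g' (G L) = act R (2^m) k g (G m)" using lift_iter[OF g, of "n+1", unfolded eqL] by blast
  have "act R (2^L) k f' (G L) = act R (2^L) k g' (G L)"
    using WD_same[OF L1 f'(1) g'(1)] f'(2) g'(2) e by simp
  then show ?thesis using f'(3) g'(3) by simp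
qed

end



definition phiR :: "'a gring \<Rightarrow> 'a \<Rightarrow> nat \<Rightarrow> (nat \<Rightarrow> int) \<Rightarrow> 'a" where
  "phiR R r k v = (let p = (SOME p. pmap (2^fst p) k (snd p) \<and> act HZ (2^fst p) k (snd p) (pm1 (fst p)) = v)
     in act R (2^fst p) k (snd p) (gpow R r (fst p)))"

lemma pmap_smash:
  assumes N: "1 \<le> N" and f: "pmap N a f" and g: "pmap M b g"
  shows "pmap (N * M) (a * b) (smash_map N a f g)"
  unfolding pmap_def
proof (intro conjI allI impI)
  show "smash_map N a f g 0 = 0" by (simp add: smash_map_def)
next
  fix x assume x: "x \<le> N * M"
  show "smash_map N a f g x \<le> a * b"
  proof (cases "x = 0")
    case True then show ?thesis by (simp add: smash_map_def)
  next
    case False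
    define i where "i = (x - 1) mod N + 1"
    define j where "j = (x - 1) div N + 1"
    have i: "i \<le> N" unfolding i_def using N by (simp add: Suc_leI)
    have "x - 1 < M * N" using x False by (cases x) (auto simp: mult.commute)
    then have j: "j \<le> M" unfolding j_def by (auto intro!: Suc_leI less_mult_imp_div_less)
    have fi: "f i \<le> a" using f i unfolding pmap_def by auto
    have gj: "g j \<le> b" using g j unfolding pmap_def by auto
    have e: "smash_map N a f g x = (if f i = 0 \<or> g j = 0 then 0 else (g j - 1) * a + f i)"
      unfolding smash_map_def Let_def i_def j_def using False by simp
    show ?thesis
    proof (cases "f i = 0 \<or> g j = 0")
      case True then show ?thesis using e by simp
    next
      case False
      have "(g j - 1) * a + f i \<le> (b - 1) * a + a" using fi gj by (intro add_mono mult_right_mono) auto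
      also have "\<dots> = a * b" using gj False by (cases b) (auto simp: mult.commute)
      finally show ?thesis using e False by simp
    qed
  qed
qed

context fdl
begin

abbreviation phi where "phi \<equiv> phiR R r"

lemma phi_eq:
  assumes f: "pmap (2^n) k f" and e: "act HZ (2^n) k f (pm1 n) = v"
  shows "phi k v = act R (2^n) k f (G n)"
proof -
  let ?P = "\<lambda>p. pmap (2^fst p) k (snd p) \<and> act HZ (2^fst p) k (snd p) (pm1 (fst p)) = v"
  have "?P (n, f)" using f e by simp
  then have P: "?P (SOME p. ?P p)" by (rule someI)
  have "act R (2^fst (SOME p. ?P p)) k (snd (SOME p. ?P p)) (G (fst (SOME p. ?P p))) = act R (2^n) k f (G n)"
    by (rule WD[OF P[THEN conjunct1] f trans[OF P[THEN conjunct2] e[symmetric]]])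
  then show ?thesis unfolding phiR_def Let_def .
qed

lemma phi_carr: "v \<in> carr HZ k \<Longrightarrow> phi k v \<in> carr R k"
proof -
  assume "v \<in> carr HZ k"
  then obtain n f where nf: "pmap (2^n) k f" "act HZ (2^n) k f (pm1 n) = v" using HZ_surj by blast
  have "phi k v = act R (2^n) k f (G n)" by (rule phi_eq[OF nf])
  then show ?thesis using act_carr[OF nf(1) gpow_carr] by simp
qed

lemma phi_bpt: "phi k (bpt HZ k) = bpt R k"
proof -
  have z: "pmap (2^0) k (\<lambda>x. 0)" by (simp add: pmap_def)
  have "act HZ (2^0) k (\<lambda>x. 0) (pm1 0) = bpt HZ k" by (auto simp: HZ_simps)
  then have "phi k (bpt HZ k) = act R 1 k (\<lambda>x. 0) (one R)" using phi_eq[OF z] by simp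
  also have "\<dots> = act R 0 k (\<lambda>x. 0) (act R 1 0 (\<lambda>x. 0) (one R))"
    using act_comp[of 1 0 "\<lambda>x. 0" k "\<lambda>x. 0" "one R"] one_carr by (simp add: pmap_def o_def)
  also have "act R 1 0 (\<lambda>x. 0) (one R) = bpt R 0"
    using act_carr[of 1 0 "\<lambda>x. 0" "one R"] one_carr c0 by (simp add: pmap_def)
  also have "act R 0 k (\<lambda>x. 0) (bpt R 0) = bpt R k" by (rule act_bpt) (simp add: pmap_def)
  finally show ?thesis .
qed

lemma phi_nat:
  assumes f: "pmap n m f" and x: "x \<in> carr HZ n"
  shows "phi m (act HZ n m f x) = act R n m f (phi n x)"
proof -
  obtain p g where g: "pmap (2^p) n g" "act HZ (2^p) n g (pm1 p) = x" using HZ_surj[OF x] by blast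
  have "act HZ n m f x = act HZ (2^p) m (f \<circ> g) (pm1 p)" unfolding g(2)[symmetric] by (rule HZ_act_comp[OF g(1) f])
  then have "phi m (act HZ n m f x) = act R (2^p) m (f \<circ> g) (G p)"
    using phi_eq[OF pmap_comp[OF g(1) f]] by simp
  also have "\<dots> = act R n m f (act R (2^p) n g (G p))" using act_comp[OF g(1) f gpow_carr] by simp
  also have "\<dots> = act R n m f (phi n x)" using phi_eq[OF g] by simp
  finally show ?thesis .
qed

lemma phi_one: "phi 1 (one HZ) = one R"
proof -
  have p: "pmap (2^1) 1 (pmap_p 2 2)" by (simp add: pmap_def pmap_p_def)
  have "act HZ (2^1) 1 (pmap_p 2 2) (pm1 1) = one HZ"
  proof
    fix j
    show "act HZ (2^1) 1 (pmap_p 2 2) (pm1 1) j = one HZ j"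
    proof (cases "j = 1")
      case True
      have "{i. 1 \<le> i \<and> i \<le> 2 \<and> pmap_p 2 2 i = 1} = {1}" by (auto simp: pmap_p_def)
      then show ?thesis using True by (simp add: HZ_simps pm1_val sg_def)
    next
      case False then show ?thesis by (auto simp: HZ_simps)
    qed
  qed
  then have "phi 1 (one HZ) = act R 2 1 (pmap_p 2 2) (G 1)" using phi_eq[OF p] by simp
  also have "G 1 = r" using mul_one[OF r_carr] by simp
  finally show ?thesis using r_p22 by simp
qed

lemma phi_mul:
  assumes x: "x \<in> carr HZ n" and y: "y \<in> carr HZ m"
  shows "phi (n * m) (mul HZ n m x y) = mul R n m (phi n x) (phi m y)"
proof -
  obtain p f where f: "pmap (2^p) n f" "act HZ (2^p) n f (pm1 p) = x" using HZ_surj[OF x] by blast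
  obtain q g where g: "pmap (2^q) m g" "act HZ (2^q) m g (pm1 q) = y" using HZ_surj[OF y] by blast
  have ps: "pmap (2^(p+q)) (n * m) (smash_map (2^p) n f g)"
    using pmap_smash[OF _ f(1) g(1)] by (simp add: power_add)
  have "mul HZ n m x y = act HZ (2^p * 2^q) (n * m) (smash_map (2^p) n f g) (mul HZ (2^p) (2^q) (pm1 p) (pm1 q))"
    unfolding f(2)[symmetric] g(2)[symmetric] by (rule HZ_smash[OF _ _ f(1) g(1)]) simp_all
  also have "\<dots> = act HZ (2^(p+q)) (n * m) (smash_map (2^p) n f g) (pm1 (p+q))"
    by (simp add: mul_pm1 power_add)
  finally have "phi (n * m) (mul HZ n m x y) = act R (2^(p+q)) (n * m) (smash_map (2^p) n f g) (G (p+q))"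
    using phi_eq[OF ps] by simp
  also have "\<dots> = act R (2^p * 2^q) (n * m) (smash_map (2^p) n f g) (mul R (2^p) (2^q) (G p) (G q))"
    by (simp add: gpow_add power_add)
  also have "\<dots> = mul R n m (act R (2^p) n f (G p)) (act R (2^q) m g (G q))"
    by (rule mul_act[OF f(1) g(1) gpow_carr gpow_carr, symmetric])
  also have "\<dots> = mul R n m (phi n x) (phi m y)" using phi_eq[OF f] phi_eq[OF g] by simp
  finally show ?thesis .
qed

lemma phi_mm: "multiplicative_map HZ R phi"
  unfolding multiplicative_map_def
proof (intro conjI allI impI)
  fix n x assume "x \<in> carr HZ n" then show "phi n x \<in> carr R n" by (rule phi_carr)
next
  fix n show "phi n (bpt HZ n) = bpt R n" by (rule phi_bpt)
next
  fix n m f x assume "pmap n m f" "x \<in> carr HZ n"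
  then show "phi m (act HZ n m f x) = act R n m f (phi n x)" by (rule phi_nat)
next
  show "phi 1 (one HZ) = one R" by (rule phi_one)
next
  fix n m x y assume "x \<in> carr HZ n" "y \<in> carr HZ m"
  then show "phi (n * m) (mul HZ n m x y) = mul R n m (phi n x) (phi m y)" by (rule phi_mul)
qed

lemma phi_pm1: "phi (2^n) (pm1 n) = G n"
proof -
  have "pmap (2^n) (2^n) id" by (simp add: pmap_def)
  then show ?thesis using phi_eq[of n "2^n" id "pm1 n"] HZ_act_id[OF pm1_carr] act_id[OF gpow_carr] by simp
qed

lemma uniq:
  assumes psi: "multiplicative_map HZ R psi" "\<forall>n. psi (2 ^ n) (pm1 n) = G n" and v: "v \<in> carr HZ k"
  shows "psi k v = phi k v"
proof -
  obtain p f where f: "pmap (2^p) k f" "act HZ (2^p) k f (pm1 p) = v" using HZ_surj[OF v] by blast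
  have "psi k v = act R (2^p) k f (psi (2^p) (pm1 p))"
  proof -
    have "\<forall>n m f x. pmap n m f \<longrightarrow> x \<in> carr HZ n \<longrightarrow> psi m (act HZ n m f x) = act R n m f (psi n x)"
      using psi(1) unfolding multiplicative_map_def by (elim conjE) assumption
    then have "psi k (act HZ (2^p) k f (pm1 p)) = act R (2^p) k f (psi (2^p) (pm1 p))"
      using f(1) pm1_carr[of p] by blast
    then show ?thesis unfolding f(2) .
  qed
  also have "\<dots> = act R (2^p) k f (G p)" using psi(2) by simp
  also have "\<dots> = phi k v" using phi_eq[OF f] by simp
  finally show ?thesis .
qed

end

theorem theorem3p4:
  fixes R :: "'a gring" and r :: 'a
  assumes "discrete_gamma_ring R"
    and "formal_difference_law R r"
  shows "\<exists>phi. multiplicative_map HZ R phi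
            \<and> (\<forall>n. phi (2 ^ n) (pm1 n) = gpow R r n)
            \<and> (\<forall>k v n f. v \<in> carr HZ k \<longrightarrow> pmap (2 ^ n) k f \<longrightarrow>
                  act HZ (2 ^ n) k f (pm1 n) = v \<longrightarrow> phi k v = act R (2 ^ n) k f (gpow R r n))
            \<and> (\<forall>psi. multiplicative_map HZ R psi \<and> (\<forall>n. psi (2 ^ n) (pm1 n) = gpow R r n) \<longrightarrow>
                  (\<forall>k. \<forall>v\<in>carr HZ k. psi k v = phi k v))"
proof -
  interpret fdl R r using assms by (rule fdl.intro)
  show ?thesis
  proof (rule exI[of _ "phiR R r"], intro conjI allI impI ballI)
    show "multiplicative_map HZ R (phiR R r)" by (rule phi_mm)
  next
    fix n show "phiR R r (2 ^ n) (pm1 n) = gpow R r n" by (rule phi_pm1)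
  next
    fix k v n f
    assume "pmap (2 ^ n) k f" "act HZ (2 ^ n) k f (pm1 n) = v"
    then show "phiR R r k v = act R (2 ^ n) k f (gpow R r n)" by (rule phi_eq)
  next
    fix psi k v
    assume "multiplicative_map HZ R psi \<and> (\<forall>n. psi (2 ^ n) (pm1 n) = gpow R r n)" "v \<in> carr HZ k"
    then show "psi k v = phiR R r k v" using uniq by blast
  qed
qed


end
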